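(* In the standing setup with duals, the element $\check 1_e\in\check A_e$ is invariant under the dual action $\check\varphi$ of $G$ if and only if $\sigma(h)(\sigma(j)+1)\equiv 0\pmod 2$ for all $h\in G$ (equivalently, if and only if $GM_f$ is $G$-Euler in the sense that $\varphi(h^{-1}j)|_{A_h}=\exp(2\pi i\mathcal{Q})|_{A_h}$ for all $h$).
   Context: Standing setup. Let $f\in\mathbb{C}[z_1,\dots,z_n]$ be quasi-homogeneous with isolated singularity at $0$ and weights $q_i\in(0,1)$; $M_f$ is its Milnor ring graded by $\deg z_i=q_i$, and $d=\sum_i(1-2q_i)$. $G$ is a finite abelian group with diagonal representation $\rho$ leaving $f$ invariant, $\rho(g)=\mathrm{diag}(e^{2\pi i\nu_i(g)})$, $\nu_i(g)\in[0,1)$; $\mathrm{Fix}(g)$ is spanned by the $z_i$ with $\nu_i(g)=0$; $A_g=M_{f|_{\mathrm{Fix}(g)}}$ (equal to $\mathbb{C}$ if $\mathrm{Fix}(g)=0$) with elements $a1_g$; $GM_f=\bigoplus_gA_g$. Fix $\sigma\in\mathrm{Hom}(G,\mathbb{Z}/2\mathbb{Z})$; action $\varphi(h)(a1_g)=(-1)^{\sigma(h)\sigma(g)}\det(\rho(h))^{-1}\det(\rho(h)|_{\mathrm{Fix}(g)})\,a(\rho(h)z)\,1_g$; character $\chi(h)=(-1)^{\sigma(h)}\det\rho(h)$. Assume $j\in G$ with $\rho(j)=\mathrm{diag}(e^{2\pi iq_1},\dots,e^{2\pi iq_n})$. Dual: $\check A_g:=A_{gj^{-1}}$, $\check{GM_f}=\bigoplus_g\check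 A_g$; write $a\check1_g$ for the element $a1_{gj^{-1}}$ regarded in $\check A_g$; dual action $\check\varphi(h)(a\check1_g)=\chi(h)\cdot(\varphi(h)(a1_{gj^{-1}}))$ regarded in $\check A_g$. Shift $s_g=\sum_{i:\nu_i(g)\neq 0}(\nu_i(g)-q_i)$, $\mathcal{Q}(a1_h)=(\deg a+s_h)a1_h$. *)

theory Defs
  imports "HOL-Library.Poly_Mapping" "HOL-Algebra.Group" Complex_Main
begin

text \<open>Polynomials in the variables z_0, z_1, ... with complex coefficients:
  a monomial is an exponent vector (nat with finite support), a polynomial a
  finitely supported map from monomials to coefficients.\<close>
type_synonym mpoly = "(nat \<Rightarrow>\<^sub>0 nat) \<Rightarrow>\<^sub>0 complex"

definition cconst :: "complex \<Rightarrow> mpoly" where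
  "cconst c = Poly_Mapping.single 0 c"

definition mon_weight :: "(nat \<Rightarrow> real) \<Rightarrow> (nat \<Rightarrow>\<^sub>0 nat) \<Rightarrow> real" where
  "mon_weight w \<alpha> = (\<Sum>i\<in>Poly_Mapping.keys \<alpha>. w i * real (Poly_Mapping.lookup \<alpha> i))"

definition vars_in :: "nat set \<Rightarrow> mpoly \<Rightarrow> bool" where
  "vars_in S p \<longleftrightarrow> (\<forall>\<alpha>\<in>Poly_Mapping.keys p. Poly_Mapping.keys \<alpha> \<subseteq> S)"

definition quasi_homogeneous :: "nat \<Rightarrow> (nat \<Rightarrow> real) \<Rightarrow> mpoly \<Rightarrow> bool" where
  "quasi_homogeneous n q f \<longleftrightarrow> vars_in {..<n} f \<and> (\<forall>\<alpha>\<in>Poly_Mapping.keys f. mon_weight q \<alpha> = 1)"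

definition pderiv_mp :: "nat \<Rightarrow> mpoly \<Rightarrow> mpoly" where
  "pderiv_mp k p = (\<Sum>\<alpha>\<in>Poly_Mapping.keys p.
      Poly_Mapping.single (\<alpha> - Poly_Mapping.single k 1) (of_nat (Poly_Mapping.lookup \<alpha> k) * Poly_Mapping.lookup p \<alpha>))"

definition eval_mp :: "mpoly \<Rightarrow> (nat \<Rightarrow> complex) \<Rightarrow> complex" where
  "eval_mp p z = (\<Sum>\<alpha>\<in>Poly_Mapping.keys p. Poly_Mapping.lookup p \<alpha> * (\<Prod>i\<in>Poly_Mapping.keys \<alpha>. z i ^ Poly_Mapping.lookup \<alpha> i))"

definition isolated_singularity :: "nat \<Rightarrow> mpoly \<Rightarrow> bool" where
  "isolated_singularity n f \<longleftrightarrow>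
     (\<exists>\<epsilon>>0. \<forall>z. (\<forall>i<n. cmod (z i) < \<epsilon>) \<and> (\<forall>k<n. eval_mp (pderiv_mp k f) z = 0)
                 \<longrightarrow> (\<forall>i<n. z i = 0))"

definition restrict_mp :: "nat set \<Rightarrow> mpoly \<Rightarrow> mpoly" where
  "restrict_mp S p = (\<Sum>\<alpha>\<in>Poly_Mapping.keys p. if Poly_Mapping.keys \<alpha> \<subseteq> S then Poly_Mapping.single \<alpha> (Poly_Mapping.lookup p \<alpha>) else 0)"

definition in_jacobian_ideal :: "nat set \<Rightarrow> mpoly \<Rightarrow> mpoly \<Rightarrow> bool" where
  "in_jacobian_ideal S f a \<longleftrightarrow> vars_in S a \<and>
     (\<exists>c. (\<forall>k\<in>S. vars_in S (c k)) \<and> a = (\<Sum>k\<in>S. c k * pderiv_mp k (restrict_mp S f)))"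

text \<open>Equality in the Milnor ring M_{f|_S} (= C if S is empty) of representatives
  a, b in C[z_i : i in S].\<close>
definition milnor_eq :: "nat set \<Rightarrow> mpoly \<Rightarrow> mpoly \<Rightarrow> mpoly \<Rightarrow> bool" where
  "milnor_eq S f a b \<longleftrightarrow> in_jacobian_ideal S f (a - b)"

text \<open>Diagonal representation rho(g) = diag(exp(2 pi i nu_i(g))), nu_i(g) in [0,1).\<close>
definition eig :: "('g \<Rightarrow> nat \<Rightarrow> real) \<Rightarrow> 'g \<Rightarrow> nat \<Rightarrow> complex" where
  "eig \<nu> g i = cis (2 * pi * \<nu> g i)"

definition diag_rep :: "('g, 'b) monoid_scheme \<Rightarrow> nat \<Rightarrow> ('g \<Rightarrow> nat \<Rightarrow> real) \<Rightarrow> bool" where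
  "diag_rep G n \<nu> \<longleftrightarrow>
     (\<forall>g\<in>carrier G. \<forall>i<n. 0 \<le> \<nu> g i \<and> \<nu> g i < 1) \<and>
     (\<forall>g\<in>carrier G. \<forall>h\<in>carrier G. \<forall>i<n. \<nu> (g \<otimes>\<^bsub>G\<^esub> h) i = frac (\<nu> g i + \<nu> h i))"

definition Fix :: "nat \<Rightarrow> ('g \<Rightarrow> nat \<Rightarrow> real) \<Rightarrow> 'g \<Rightarrow> nat set" where
  "Fix n \<nu> g = {i. i < n \<and> \<nu> g i = 0}"

text \<open>a(rho(h) z)\<close>
definition act_mp :: "('g \<Rightarrow> nat \<Rightarrow> real) \<Rightarrow> 'g \<Rightarrow> mpoly \<Rightarrow> mpoly" where
  "act_mp \<nu> h p = (\<Sum>\<alpha>\<in>Poly_Mapping.keys p.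
      Poly_Mapping.single \<alpha> (Poly_Mapping.lookup p \<alpha> * (\<Prod>i\<in>Poly_Mapping.keys \<alpha>. eig \<nu> h i ^ Poly_Mapping.lookup \<alpha> i)))"

definition det_rho :: "nat \<Rightarrow> ('g \<Rightarrow> nat \<Rightarrow> real) \<Rightarrow> 'g \<Rightarrow> complex" where
  "det_rho n \<nu> h = (\<Prod>i<n. eig \<nu> h i)"

definition det_rho_fix :: "nat \<Rightarrow> ('g \<Rightarrow> nat \<Rightarrow> real) \<Rightarrow> 'g \<Rightarrow> 'g \<Rightarrow> complex" where
  "det_rho_fix n \<nu> h g = (\<Prod>i\<in>Fix n \<nu> g. eig \<nu> h i)"

definition hom_Z2 :: "('g, 'b) monoid_scheme \<Rightarrow> ('g \<Rightarrow> nat) \<Rightarrow> bool" where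
  "hom_Z2 G \<sigma> \<longleftrightarrow> (\<forall>g\<in>carrier G. \<sigma> g \<in> {0, 1}) \<and>
     (\<forall>g\<in>carrier G. \<forall>h\<in>carrier G. \<sigma> (g \<otimes>\<^bsub>G\<^esub> h) = (\<sigma> g + \<sigma> h) mod 2)"

text \<open>phi(h)(a 1_g), the result being a representative of an element of A_g.\<close>
definition phi :: "nat \<Rightarrow> ('g \<Rightarrow> nat \<Rightarrow> real) \<Rightarrow> ('g \<Rightarrow> nat) \<Rightarrow> 'g \<Rightarrow> 'g \<Rightarrow> mpoly \<Rightarrow> mpoly" where
  "phi n \<nu> \<sigma> h g a = cconst ((-1) ^ (\<sigma> h * \<sigma> g) * inverse (det_rho n \<nu> h) * det_rho_fix n \<nu> h g)
                       * act_mp \<nu> h a"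

definition chi :: "nat \<Rightarrow> ('g \<Rightarrow> nat \<Rightarrow> real) \<Rightarrow> ('g \<Rightarrow> nat) \<Rightarrow> 'g \<Rightarrow> complex" where
  "chi n \<nu> \<sigma> h = (-1) ^ \<sigma> h * det_rho n \<nu> h"

text \<open>Dual action: check-phi(h)(a check-1_g) = chi(h) phi(h)(a 1_{g j^-1}),
  a representative of an element of check-A_g = A_{g j^-1}.\<close>
definition dual_phi :: "('g, 'b) monoid_scheme \<Rightarrow> nat \<Rightarrow> ('g \<Rightarrow> nat \<Rightarrow> real) \<Rightarrow> ('g \<Rightarrow> nat)
                        \<Rightarrow> 'g \<Rightarrow> 'g \<Rightarrow> 'g \<Rightarrow> mpoly \<Rightarrow> mpoly" where
  "dual_phi G n \<nu> \<sigma> j h g a = cconst (chi n \<nu> \<sigma> h) * phi n \<nu> \<sigma> h (g \<otimes>\<^bsub>G\<^esub> inv\<^bsub>G\<^esub> j) a"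

definition dual_unit_invariant :: "('g, 'b) monoid_scheme \<Rightarrow> nat \<Rightarrow> mpoly \<Rightarrow> ('g \<Rightarrow> nat \<Rightarrow> real)
                                   \<Rightarrow> ('g \<Rightarrow> nat) \<Rightarrow> 'g \<Rightarrow> bool" where
  "dual_unit_invariant G n f \<nu> \<sigma> j \<longleftrightarrow>
     (\<forall>h\<in>carrier G. milnor_eq (Fix n \<nu> (\<one>\<^bsub>G\<^esub> \<otimes>\<^bsub>G\<^esub> inv\<^bsub>G\<^esub> j)) f
                        (dual_phi G n \<nu> \<sigma> j h \<one>\<^bsub>G\<^esub> 1) 1)"

text \<open>Shift s_g and exp(2 pi i Q) on A_g (extended linearly from quasi-homogeneous elements).\<close>
definition shift :: "nat \<Rightarrow> (nat \<Rightarrow> real) \<Rightarrow> ('g \<Rightarrow> nat \<Rightarrow> real) \<Rightarrow> 'g \<Rightarrow> real" where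
  "shift n q \<nu> g = (\<Sum>i\<in>{i. i < n \<and> \<nu> g i \<noteq> 0}. \<nu> g i - q i)"

definition expQ :: "nat \<Rightarrow> (nat \<Rightarrow> real) \<Rightarrow> ('g \<Rightarrow> nat \<Rightarrow> real) \<Rightarrow> 'g \<Rightarrow> mpoly \<Rightarrow> mpoly" where
  "expQ n q \<nu> g a = (\<Sum>\<alpha>\<in>Poly_Mapping.keys a.
      Poly_Mapping.single \<alpha> (Poly_Mapping.lookup a \<alpha> * cis (2 * pi * (mon_weight q \<alpha> + shift n q \<nu> g))))"

definition G_Euler :: "('g, 'b) monoid_scheme \<Rightarrow> nat \<Rightarrow> (nat \<Rightarrow> real) \<Rightarrow> mpoly \<Rightarrow> ('g \<Rightarrow> nat \<Rightarrow> real)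
                       \<Rightarrow> ('g \<Rightarrow> nat) \<Rightarrow> 'g \<Rightarrow> bool" where
  "G_Euler G n q f \<nu> \<sigma> j \<longleftrightarrow>
     (\<forall>h\<in>carrier G. \<forall>a. vars_in (Fix n \<nu> h) a \<longrightarrow>
        milnor_eq (Fix n \<nu> h) f (phi n \<nu> \<sigma> (inv\<^bsub>G\<^esub> h \<otimes>\<^bsub>G\<^esub> j) h a) (expQ n q \<nu> h a))"

end

theory Submission
  imports Defs
begin

lemma cis_frac: "cis (2 * pi * frac x) = cis (2 * pi * x)"
proof -
  have "cis (2 * pi * x) = cis (2 * pi * frac x) * cis (2 * pi * of_int \<lfloor>x\<rfloor>)"
    by (simp add: cis_mult frac_def algebra_simps)
  also have "cis (2 * pi * of_int \<lfloor>x\<rfloor>) = 1" by (rule cis_multiple_2pi) simp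
  finally show ?thesis by simp
qed

lemma cis_sum: "finite A \<Longrightarrow> cis (\<Sum>i\<in>A. f i) = (\<Prod>i\<in>A. cis (f i))"
  by (induction A rule: finite_induct) (auto simp: cis_mult[symmetric])

lemma cconst_mult_sum:
  "cconst c * (\<Sum>\<alpha>\<in>A. Poly_Mapping.single \<alpha> (x \<alpha>)) = (\<Sum>\<alpha>\<in>A. Poly_Mapping.single \<alpha> (c * x \<alpha>))"
  by (simp add: cconst_def sum_distrib_left mult_single)

lemma lookup_sum_single:
  "finite A \<Longrightarrow> Poly_Mapping.lookup (\<Sum>\<alpha>\<in>A. Poly_Mapping.single \<alpha> (x \<alpha>)) \<beta> = (if \<beta> \<in> A then x \<beta> else 0)"
  by (simp add: lookup_sum lookup_single when_def)

lemma const_mult_zero: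
  fixes c p :: mpoly
  assumes "Poly_Mapping.lookup p 0 = 0"
  shows "Poly_Mapping.lookup (c * p) 0 = 0"
proof -
  have "0 \<notin> Poly_Mapping.keys (c * p)"
  proof
    assume "0 \<in> Poly_Mapping.keys (c * p)"
    then obtain a b where "a \<in> Poly_Mapping.keys c" "b \<in> Poly_Mapping.keys p" "0 = a + b"
      using keys_mult by blast
    then have "b = 0"
    proof (intro poly_mapping_eqI)
      fix k have "Poly_Mapping.lookup a k + Poly_Mapping.lookup b k = 0"
        using \<open>0 = a + b\<close> by (metis lookup_add lookup_zero)
      then show "Poly_Mapping.lookup b k = Poly_Mapping.lookup 0 k" by simp
    qed
    then show False using assms \<open>b \<in> _\<close> by (simp add: in_keys_iff)
  qed
  then show ?thesis by (simp add: in_keys_iff)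
qed


lemma lookup_restrict:
  "Poly_Mapping.lookup (restrict_mp S p) \<beta> = (if Poly_Mapping.keys \<beta> \<subseteq> S then Poly_Mapping.lookup p \<beta> else 0)"
proof -
  have "Poly_Mapping.lookup (restrict_mp S p) \<beta> =
     (\<Sum>\<alpha>\<in>Poly_Mapping.keys p. if Poly_Mapping.keys \<alpha> \<subseteq> S \<and> \<alpha> = \<beta> then Poly_Mapping.lookup p \<alpha> else 0)"
    unfolding restrict_mp_def lookup_sum
    by (intro sum.cong) (auto simp: lookup_single when_def)
  also have "\<dots> = (if Poly_Mapping.keys \<beta> \<subseteq> S then Poly_Mapping.lookup p \<beta> else 0)"
  proof -
    have "(\<Sum>\<alpha>\<in>Poly_Mapping.keys p. if Poly_Mapping.keys \<alpha> \<subseteq> S \<and> \<alpha> = \<beta> then Poly_Mapping.lookup p \<alpha> else 0)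
      = (\<Sum>\<alpha>\<in>Poly_Mapping.keys p. if \<alpha> = \<beta> then (if Poly_Mapping.keys \<beta> \<subseteq> S then Poly_Mapping.lookup p \<beta> else 0) else 0)"
      by (intro sum.cong) auto
    also have "\<dots> = (if Poly_Mapping.keys \<beta> \<subseteq> S then Poly_Mapping.lookup p \<beta> else 0)"
      by (simp add: sum.delta' in_keys_iff)
    finally show ?thesis .
  qed
  finally show ?thesis .
qed

lemma pderiv_restrict_const:
  assumes qh: "quasi_homogeneous n q f" and w: "\<forall>i<n. q i < 1"
  shows "Poly_Mapping.lookup (pderiv_mp k (restrict_mp S f)) 0 = 0"
proof -
  let ?p = "restrict_mp S f"
  have "Poly_Mapping.lookup (pderiv_mp k ?p) 0 =
    (\<Sum>\<alpha>\<in>Poly_Mapping.keys ?p. (of_nat (Poly_Mapping.lookup \<alpha> k) * Poly_Mapping.lookup ?p \<alpha>) when (\<alpha> - Poly_Mapping.single k 1 = 0))"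
    unfolding pderiv_mp_def lookup_sum by (simp add: lookup_single)
  also have "\<dots> = 0"
  proof (intro sum.neutral ballI)
    fix \<alpha> assume a: "\<alpha> \<in> Poly_Mapping.keys ?p"
    show "((of_nat (Poly_Mapping.lookup \<alpha> k) * Poly_Mapping.lookup ?p \<alpha>) when (\<alpha> - Poly_Mapping.single k 1 = 0)) = 0"
    proof (rule ccontr)
      assume ne: "\<not> ?thesis"
      then have z: "\<alpha> - Poly_Mapping.single k 1 = 0" and ak: "Poly_Mapping.lookup \<alpha> k \<noteq> 0"
        by (auto simp: when_def split: if_splits)
      have le: "Poly_Mapping.lookup \<alpha> i \<le> Poly_Mapping.lookup (Poly_Mapping.single k 1) i" for i
        using arg_cong[OF z, of "\<lambda>x. Poly_Mapping.lookup x i"] by (simp add: lookup_minus)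
      have aeq: "\<alpha> = Poly_Mapping.single k 1"
      proof (intro poly_mapping_eqI)
        fix i show "Poly_Mapping.lookup \<alpha> i = Poly_Mapping.lookup (Poly_Mapping.single k 1) i"
          using le[of i] ak by (cases "i = k") (auto simp: lookup_single)
      qed
      have af: "\<alpha> \<in> Poly_Mapping.keys f"
        using a by (auto simp: in_keys_iff lookup_restrict split: if_splits)
      then have "mon_weight q \<alpha> = 1" "Poly_Mapping.keys \<alpha> \<subseteq> {..<n}"
        using qh by (auto simp: quasi_homogeneous_def vars_in_def)
      then show False using aeq w by (auto simp: mon_weight_def)
    qed
  qed
  finally show ?thesis .
qed

lemma jac_const:
  assumes qh: "quasi_homogeneous n q f" and w: "\<forall>i<n. q i < 1"
    and "in_jacobian_ideal S f a"
  shows "Poly_Mapping.lookup a 0 = 0"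
proof -
  obtain c where "a = (\<Sum>k\<in>S. c k * pderiv_mp k (restrict_mp S f))"
    using assms(3) by (auto simp: in_jacobian_ideal_def)
  then show ?thesis
    by (simp add: lookup_sum const_mult_zero[OF pderiv_restrict_const[OF qh w]])
qed


lemma eig_mult:
  assumes "diag_rep G n \<nu>" "g \<in> carrier G" "h \<in> carrier G" "i < n"
  shows "eig \<nu> (g \<otimes>\<^bsub>G\<^esub> h) i = eig \<nu> g i * eig \<nu> h i"
  using assms by (simp add: eig_def diag_rep_def cis_frac cis_mult distrib_left)

lemma milnor_eq_refl: "milnor_eq S f a a"
  unfolding milnor_eq_def in_jacobian_ideal_def vars_in_def
  by (auto intro!: exI[of _ "\<lambda>_. 0"])

lemma milnor_eq_empty: "milnor_eq {} f a b \<longleftrightarrow> a = b"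
  unfolding milnor_eq_def in_jacobian_ideal_def vars_in_def by auto

lemma cconst_mult: "cconst a * cconst b = cconst (a * b)"
  by (simp add: cconst_def mult_single)

lemma cconst_eq_one: "cconst a = 1 \<longleftrightarrow> a = 1"
proof
  assume "cconst a = 1"
  then have "Poly_Mapping.lookup (cconst a) 0 = Poly_Mapping.lookup 1 0" by simp
  then show "a = 1" by (simp add: cconst_def)
qed (simp add: cconst_def)

lemma act_mp_one: "act_mp \<nu> h 1 = 1"
  by (simp add: act_mp_def)

lemma expQ_one: "expQ n q \<nu> g 1 = Poly_Mapping.single 0 (cis (2 * pi * shift n q \<nu> g))"
  by (simp add: expQ_def mon_weight_def)


lemma phi_expQ:
  assumes grp: "comm_group G" and rep: "diag_rep G n \<nu>"
    and jG: "j \<in> carrier G" and jq: "\<forall>i<n. \<nu> j i = q i"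
    and hG: "h \<in> carrier G" and va: "vars_in (Fix n \<nu> h) a"
  shows "phi n \<nu> \<sigma> (inv\<^bsub>G\<^esub> h \<otimes>\<^bsub>G\<^esub> j) h a
       = cconst ((-1) ^ (\<sigma> (inv\<^bsub>G\<^esub> h \<otimes>\<^bsub>G\<^esub> j) * \<sigma> h)) * expQ n q \<nu> h a"
proof -
  interpret comm_group G by (rule grp)
  define g where "g = inv\<^bsub>G\<^esub> h \<otimes>\<^bsub>G\<^esub> j"
  define F where "F = Fix n \<nu> h"
  define N where "N = {i. i < n \<and> \<nu> h i \<noteq> 0}"
  define t where "t i = cis (2 * pi * q i)" for i
  define e where "e i = eig \<nu> h i" for i
  have gG: "g \<in> carrier G" using hG jG by (simp add: g_def)
  have e1: "eig \<nu> \<one>\<^bsub>G\<^esub> i = 1" if "i < n" for i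
  proof -
    have "eig \<nu> \<one>\<^bsub>G\<^esub> i = eig \<nu> \<one>\<^bsub>G\<^esub> i * eig \<nu> \<one>\<^bsub>G\<^esub> i"
      using eig_mult[OF rep one_closed one_closed that] by simp
    moreover have "eig \<nu> \<one>\<^bsub>G\<^esub> i \<noteq> 0" by (simp add: eig_def)
    ultimately show ?thesis by (metis mult_cancel_left2)
  qed
  have eg: "eig \<nu> g i = inverse (e i) * t i" if "i < n" for i
  proof -
    have "eig \<nu> (inv\<^bsub>G\<^esub> h) i * e i = 1"
      using eig_mult[OF rep inv_closed[OF hG] hG that] e1[OF that] hG by (simp add: e_def)
    then have "eig \<nu> (inv\<^bsub>G\<^esub> h) i = inverse (e i)"
      by (metis inverse_unique mult.commute)
    then show ?thesis
      using eig_mult[OF rep inv_closed[OF hG] jG that] jq that by (simp add: g_def t_def eig_def)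
  qed
  have eF: "e i = 1" if "i \<in> F" for i
    using that by (simp add: e_def F_def Fix_def eig_def)
  have tnz: "t i \<noteq> 0" for i by (simp add: t_def)
  have enz: "e i \<noteq> 0" for i by (simp add: e_def eig_def)
  have FN: "{..<n} = F \<union> N" "F \<inter> N = {}" "finite F" "finite N"
    by (auto simp: F_def N_def Fix_def)
  have det: "det_rho n \<nu> g = (\<Prod>i\<in>F. t i) * (\<Prod>i\<in>N. inverse (e i) * t i)"
  proof -
    have "det_rho n \<nu> g = (\<Prod>i\<in>F \<union> N. eig \<nu> g i)" by (simp add: det_rho_def FN(1))
    also have "\<dots> = (\<Prod>i\<in>F. eig \<nu> g i) * (\<Prod>i\<in>N. eig \<nu> g i)"
      by (rule prod.union_disjoint) (use FN in auto)
    also have "(\<Prod>i\<in>F. eig \<nu> g i) = (\<Prod>i\<in>F. t i)"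
      by (intro prod.cong) (auto simp: eg eF F_def Fix_def)
    also have "(\<Prod>i\<in>N. eig \<nu> g i) = (\<Prod>i\<in>N. inverse (e i) * t i)"
      by (intro prod.cong) (auto simp: eg N_def)
    finally show ?thesis .
  qed
  have detF: "det_rho_fix n \<nu> g h = (\<Prod>i\<in>F. t i)"
    unfolding det_rho_fix_def F_def[symmetric]
    by (intro prod.cong) (auto simp: eg eF F_def Fix_def)
  have sh: "cis (2 * pi * shift n q \<nu> h) = (\<Prod>i\<in>N. e i * inverse (t i))"
  proof -
    have "cis (2 * pi * shift n q \<nu> h) = cis (\<Sum>i\<in>N. 2 * pi * (\<nu> h i - q i))"
      by (simp add: shift_def N_def sum_distrib_left)
    also have "\<dots> = (\<Prod>i\<in>N. cis (2 * pi * (\<nu> h i - q i)))" by (rule cis_sum) (use FN in auto)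
    also have "\<dots> = (\<Prod>i\<in>N. e i * inverse (t i))"
      by (intro prod.cong) (auto simp: e_def t_def eig_def cis_mult right_diff_distrib)
    finally show ?thesis .
  qed
  have K: "inverse (det_rho n \<nu> g) * det_rho_fix n \<nu> g h = cis (2 * pi * shift n q \<nu> h)"
  proof -
    have A: "(\<Prod>i\<in>F. t i) \<noteq> 0" using tnz by (simp add: prod_zero_iff FN)
    have B: "(\<Prod>i\<in>N. inverse (e i) * t i) \<noteq> 0" using tnz enz by (simp add: prod_zero_iff FN)
    have "inverse (det_rho n \<nu> g) * det_rho_fix n \<nu> g h = inverse (\<Prod>i\<in>N. inverse (e i) * t i)"
      unfolding det detF using A B by (simp add: field_simps)
    also have "\<dots> = (\<Prod>i\<in>N. inverse (inverse (e i) * t i))" using prod_inversef[of "\<lambda>i. inverse (e i) * t i" N] by (simp add: o_def)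
    also have "\<dots> = (\<Prod>i\<in>N. e i * inverse (t i))" by (simp add: mult.commute)
    finally show ?thesis using sh by simp
  qed
  have P: "(\<Prod>i\<in>Poly_Mapping.keys \<alpha>. eig \<nu> g i ^ Poly_Mapping.lookup \<alpha> i) = cis (2 * pi * mon_weight q \<alpha>)"
    if "\<alpha> \<in> Poly_Mapping.keys a" for \<alpha>
  proof -
    have sub: "Poly_Mapping.keys \<alpha> \<subseteq> F" using va that by (auto simp: vars_in_def F_def)
    have "(\<Prod>i\<in>Poly_Mapping.keys \<alpha>. eig \<nu> g i ^ Poly_Mapping.lookup \<alpha> i)
        = (\<Prod>i\<in>Poly_Mapping.keys \<alpha>. cis (2 * pi * (q i * real (Poly_Mapping.lookup \<alpha> i))))"
    proof (intro prod.cong refl)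
      fix i assume "i \<in> Poly_Mapping.keys \<alpha>"
      then have "i \<in> F" using sub by auto
      then have "i < n" by (simp add: F_def Fix_def)
      then show "eig \<nu> g i ^ Poly_Mapping.lookup \<alpha> i = cis (2 * pi * (q i * real (Poly_Mapping.lookup \<alpha> i)))"
        using eg eF \<open>i \<in> F\<close> by (simp add: t_def DeMoivre algebra_simps)
    qed
    also have "\<dots> = cis (2 * pi * mon_weight q \<alpha>)"
      by (simp add: cis_sum[symmetric] mon_weight_def sum_distrib_left)
    finally show ?thesis .
  qed
  have "phi n \<nu> \<sigma> g h a = (\<Sum>\<alpha>\<in>Poly_Mapping.keys a. Poly_Mapping.single \<alpha>
       ((-1) ^ (\<sigma> g * \<sigma> h) * inverse (det_rho n \<nu> g) * det_rho_fix n \<nu> g h *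
        (Poly_Mapping.lookup a \<alpha> * (\<Prod>i\<in>Poly_Mapping.keys \<alpha>. eig \<nu> g i ^ Poly_Mapping.lookup \<alpha> i))))"
    unfolding phi_def act_mp_def cconst_mult_sum ..
  also have "\<dots> = (\<Sum>\<alpha>\<in>Poly_Mapping.keys a. Poly_Mapping.single \<alpha>
       ((-1) ^ (\<sigma> g * \<sigma> h) * (Poly_Mapping.lookup a \<alpha> * cis (2 * pi * (mon_weight q \<alpha> + shift n q \<nu> h)))))"
  proof (intro sum.cong refl arg_cong[where f="Poly_Mapping.single _"])
    fix \<alpha> assume "\<alpha> \<in> Poly_Mapping.keys a"
    then show "(-1) ^ (\<sigma> g * \<sigma> h) * inverse (det_rho n \<nu> g) * det_rho_fix n \<nu> g h *
        (Poly_Mapping.lookup a \<alpha> * (\<Prod>i\<in>Poly_Mapping.keys \<alpha>. eig \<nu> g i ^ Poly_Mapping.lookup \<alpha> i)) =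
      (-1) ^ (\<sigma> g * \<sigma> h) * (Poly_Mapping.lookup a \<alpha> * cis (2 * pi * (mon_weight q \<alpha> + shift n q \<nu> h)))"
      using P K by (simp add: distrib_left cis_mult[symmetric] mult_ac)
  qed
  also have "\<dots> = cconst ((-1) ^ (\<sigma> g * \<sigma> h)) * expQ n q \<nu> h a"
    unfolding expQ_def cconst_mult_sum ..
  finally show ?thesis by (simp add: g_def)
qed


theorem mainTheorem3:
  fixes G :: "'g monoid" and n :: nat and q :: "nat \<Rightarrow> real" and f :: mpoly
    and \<nu> :: "'g \<Rightarrow> nat \<Rightarrow> real" and \<sigma> :: "'g \<Rightarrow> nat" and j :: 'g
  assumes weights: "\<forall>i<n. 0 < q i \<and> q i < 1"
    and qh: "quasi_homogeneous n q f"
    and isol: "isolated_singularity n f"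
    and grp: "comm_group G" and fin: "finite (carrier G)"
    and rep: "diag_rep G n \<nu>"
    and inv_f: "\<forall>h\<in>carrier G. act_mp \<nu> h f = f"
    and sig: "hom_Z2 G \<sigma>"
    and jG: "j \<in> carrier G" and jq: "\<forall>i<n. \<nu> j i = q i"
  shows "(dual_unit_invariant G n f \<nu> \<sigma> j \<longleftrightarrow>
            (\<forall>h\<in>carrier G. (\<sigma> h * (\<sigma> j + 1)) mod 2 = 0))
       \<and> ((\<forall>h\<in>carrier G. (\<sigma> h * (\<sigma> j + 1)) mod 2 = 0) \<longleftrightarrow> G_Euler G n q f \<nu> \<sigma> j)"
proof -
  interpret comm_group G by (rule grp)
  have s01: "\<sigma> g = 0 \<or> \<sigma> g = 1" if "g \<in> carrier G" for g
    using sig that by (auto simp: hom_Z2_def)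
  have smul: "\<sigma> (g \<otimes>\<^bsub>G\<^esub> h) = (\<sigma> g + \<sigma> h) mod 2" if "g \<in> carrier G" "h \<in> carrier G" for g h
    using sig that by (auto simp: hom_Z2_def)
  have s1: "\<sigma> \<one>\<^bsub>G\<^esub> = 0" using smul[of "\<one>\<^bsub>G\<^esub>" "\<one>\<^bsub>G\<^esub>"] s01[of "\<one>\<^bsub>G\<^esub>"] by auto
  have sinv: "\<sigma> (inv\<^bsub>G\<^esub> g) = \<sigma> g" if "g \<in> carrier G" for g
    using smul[of "inv\<^bsub>G\<^esub> g" g] s01[of g] s01[of "inv\<^bsub>G\<^esub> g"] that s1 by auto
  have nu1: "\<nu> \<one>\<^bsub>G\<^esub> i = 0" if "i < n" for i
  proof -
    have r: "0 \<le> \<nu> \<one>\<^bsub>G\<^esub> i" "\<nu> \<one>\<^bsub>G\<^esub> i < 1" using rep that by (auto simp: diag_rep_def)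
    have "\<nu> \<one>\<^bsub>G\<^esub> i = frac (\<nu> \<one>\<^bsub>G\<^esub> i + \<nu> \<one>\<^bsub>G\<^esub> i)" using rep that by (force simp: diag_rep_def)
    then have "\<nu> \<one>\<^bsub>G\<^esub> i = of_int \<lfloor>\<nu> \<one>\<^bsub>G\<^esub> i + \<nu> \<one>\<^bsub>G\<^esub> i\<rfloor>" by (simp add: frac_def)
    then obtain k :: int where k: "\<nu> \<one>\<^bsub>G\<^esub> i = of_int k" by blast
    with r have "k = 0" by simp
    then show ?thesis using k by simp
  qed
  have Fix0: "Fix n \<nu> (\<one>\<^bsub>G\<^esub> \<otimes>\<^bsub>G\<^esub> inv\<^bsub>G\<^esub> j) = {}"
  proof -
    have "\<nu> (inv\<^bsub>G\<^esub> j) i \<noteq> 0" if "i < n" for i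
    proof
      assume z: "\<nu> (inv\<^bsub>G\<^esub> j) i = 0"
      have "\<nu> (inv\<^bsub>G\<^esub> j \<otimes>\<^bsub>G\<^esub> j) i = frac (\<nu> (inv\<^bsub>G\<^esub> j) i + \<nu> j i)"
        using rep that jG inv_closed[OF jG] unfolding diag_rep_def by blast
      then have "0 = frac (q i)" using z nu1[OF that] jq that jG by simp
      also have "frac (q i) = q i" using weights that by (simp add: frac_eq less_imp_le)
      finally show False using weights that by force
    qed
    then show ?thesis using jG by (auto simp: Fix_def)
  qed
  have detnz: "det_rho n \<nu> h \<noteq> 0" for h by (simp add: det_rho_def eig_def)
  have dphi: "dual_phi G n \<nu> \<sigma> j h \<one>\<^bsub>G\<^esub> 1 = cconst ((-1) ^ \<sigma> h * (-1) ^ (\<sigma> h * \<sigma> j))"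
    if hG: "h \<in> carrier G" for h
  proof -
    have "dual_phi G n \<nu> \<sigma> j h \<one>\<^bsub>G\<^esub> 1 = cconst ((-1) ^ \<sigma> h * det_rho n \<nu> h *
       ((-1) ^ (\<sigma> h * \<sigma> (\<one>\<^bsub>G\<^esub> \<otimes>\<^bsub>G\<^esub> inv\<^bsub>G\<^esub> j)) * inverse (det_rho n \<nu> h) * 1))"
      unfolding dual_phi_def phi_def chi_def act_mp_one det_rho_fix_def Fix0
      by (simp add: cconst_mult)
    also have "\<sigma> (\<one>\<^bsub>G\<^esub> \<otimes>\<^bsub>G\<^esub> inv\<^bsub>G\<^esub> j) = \<sigma> j" using jG sinv by simp
    finally show ?thesis using detnz[of h] by (simp add: field_simps)
  qed
  have part1: "dual_unit_invariant G n f \<nu> \<sigma> j \<longleftrightarrow> (\<forall>h\<in>carrier G. (\<sigma> h * (\<sigma> j + 1)) mod 2 = 0)"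
    unfolding dual_unit_invariant_def Fix0 milnor_eq_empty
  proof (intro ball_cong refl)
    fix h assume hG: "h \<in> carrier G"
    show "dual_phi G n \<nu> \<sigma> j h \<one>\<^bsub>G\<^esub> 1 = 1 \<longleftrightarrow> (\<sigma> h * (\<sigma> j + 1)) mod 2 = 0"
      unfolding dphi[OF hG] cconst_eq_one using s01[OF hG] s01[OF jG] by auto
  qed
  have part2: "(\<forall>h\<in>carrier G. (\<sigma> h * (\<sigma> j + 1)) mod 2 = 0) \<longleftrightarrow> G_Euler G n q f \<nu> \<sigma> j"
  proof
    assume c: "\<forall>h\<in>carrier G. (\<sigma> h * (\<sigma> j + 1)) mod 2 = 0"
    show "G_Euler G n q f \<nu> \<sigma> j"
      unfolding G_Euler_def
    proof (intro ballI allI impI)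
      fix h a assume hG: "h \<in> carrier G" and va: "vars_in (Fix n \<nu> h) a"
      have "(-1::complex) ^ (\<sigma> (inv\<^bsub>G\<^esub> h \<otimes>\<^bsub>G\<^esub> j) * \<sigma> h) = 1"
        using c hG s01[OF hG] s01[OF jG] smul[of "inv\<^bsub>G\<^esub> h" j] sinv[OF hG] jG by auto
      then show "milnor_eq (Fix n \<nu> h) f (phi n \<nu> \<sigma> (inv\<^bsub>G\<^esub> h \<otimes>\<^bsub>G\<^esub> j) h a) (expQ n q \<nu> h a)"
        unfolding phi_expQ[OF grp rep jG jq hG va] by (simp add: cconst_def milnor_eq_refl)
    qed
  next
    assume E: "G_Euler G n q f \<nu> \<sigma> j"
    show "\<forall>h\<in>carrier G. (\<sigma> h * (\<sigma> j + 1)) mod 2 = 0"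
    proof (rule ccontr)
      assume "\<not> ?thesis"
      then obtain h where hG: "h \<in> carrier G" and odd: "(\<sigma> h * (\<sigma> j + 1)) mod 2 \<noteq> 0" by blast
      then have sh: "\<sigma> h = 1" "\<sigma> j = 0" using s01[OF hG] s01[OF jG] by auto
      have "(-1::complex) ^ (\<sigma> (inv\<^bsub>G\<^esub> h \<otimes>\<^bsub>G\<^esub> j) * \<sigma> h) = -1"
        using sh hG smul[of "inv\<^bsub>G\<^esub> h" j] sinv[OF hG] jG by auto
      have va: "vars_in (Fix n \<nu> h) 1" by (simp add: vars_in_def)
      define x where "x = cis (2 * pi * shift n q \<nu> h)"
      have "milnor_eq (Fix n \<nu> h) f (phi n \<nu> \<sigma> (inv\<^bsub>G\<^esub> h \<otimes>\<^bsub>G\<^esub> j) h 1) (expQ n q \<nu> h 1)"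
        using E hG va by (simp add: G_Euler_def)
      then have "in_jacobian_ideal (Fix n \<nu> h) f
         (Poly_Mapping.single 0 (- x) - Poly_Mapping.single 0 x)"
        unfolding milnor_eq_def phi_expQ[OF grp rep jG jq hG va] expQ_one x_def[symmetric]
        using \<open>(-1::complex) ^ _ = -1\<close> by (simp add: cconst_def mult_single)
      from jac_const[OF qh _ this] weights
      have "Poly_Mapping.lookup (Poly_Mapping.single 0 (- x) - Poly_Mapping.single 0 x :: mpoly) 0 = 0"
        by auto
      then have "x = 0" by (simp add: lookup_minus)
      then show False by (simp add: x_def)
    qed
  qed
  show ?thesis using part1 part2 by blast
qed

end
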